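(* Fix $1<p,q<\infty$ with $\frac1p+\frac1q=1$, an integer $r>1$, and put $t=r^{1/q}$, $s=r^{1/p}$. Then for every $x\in\mathcal N_s$ we have $|x|_{p,r}\le 1+\frac{\|x\|_p^p}{t}$.
   Context: For $\alpha>0$ let $C_\alpha=\{\pm\alpha^j: j\in\mathbb Z\}\cup\{0\}$ and $\mathcal N_\alpha=\{x\in c_{00}: x(i)\in C_\alpha \text{ for all } i\}$ ($c_{00}$ = finitely supported real sequences). Let $K^{\mathcal M}_{q,r}$ be the smallest subset of $c_{00}$ containing all $\pm e_n$ and such that whenever $y_1,\dots,y_l\in K^{\mathcal M}_{q,r}$, $l\le r$, have pairwise disjoint supports, then $r^{-1/q}(y_1+\dots+y_l)\in K^{\mathcal M}_{q,r}$. Define $|x|_{p,r}=\sup\{\sum_i x(i)y(i): y\in K^{\mathcal M}_{q,r}\}$. *)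

theory Defs
  imports Complex_Main
begin

definition supp :: "(nat \<Rightarrow> real) \<Rightarrow> nat set" where
  "supp x = {i. x i \<noteq> 0}"

definition c00 :: "(nat \<Rightarrow> real) set" where
  "c00 = {x. finite (supp x)}"

definition unit_vec :: "nat \<Rightarrow> nat \<Rightarrow> real" where
  "unit_vec n = (\<lambda>i. if i = n then 1 else 0)"

definition C_set :: "real \<Rightarrow> real set" where
  "C_set \<alpha> = {\<alpha> powr (real_of_int j) | j. True} \<union> {- (\<alpha> powr (real_of_int j)) | j. True} \<union> {0}"

definition N_set :: "real \<Rightarrow> (nat \<Rightarrow> real) set" where
  "N_set \<alpha> = {x \<in> c00. \<forall>i. x i \<in> C_set \<alpha>}"

inductive_set K_M :: "real \<Rightarrow> nat \<Rightarrow> (nat \<Rightarrow> real) set" for q :: real and r :: nat where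
  unit_pos: "unit_vec n \<in> K_M q r"
| unit_neg: "(\<lambda>i. - unit_vec n i) \<in> K_M q r"
| comb: "\<lbrakk> 1 \<le> length ys; length ys \<le> r; \<forall>y \<in> set ys. y \<in> K_M q r;
           \<forall>a < length ys. \<forall>b < length ys. a \<noteq> b \<longrightarrow> supp (ys ! a) \<inter> supp (ys ! b) = {} \<rbrakk>
         \<Longrightarrow> (\<lambda>i. real r powr (- 1 / q) * (\<Sum>y\<leftarrow>ys. y i)) \<in> K_M q r"

definition pair :: "(nat \<Rightarrow> real) \<Rightarrow> (nat \<Rightarrow> real) \<Rightarrow> real" where
  "pair x y = (\<Sum>i\<in>supp x. x i * y i)"

definition norm_pr :: "real \<Rightarrow> real \<Rightarrow> nat \<Rightarrow> (nat \<Rightarrow> real) \<Rightarrow> real" where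
  "norm_pr p q r x = (SUP y \<in> K_M q r. pair x y)"

definition lp_pow :: "real \<Rightarrow> (nat \<Rightarrow> real) \<Rightarrow> real" where
  "lp_pow p x = (\<Sum>i\<in>supp x. \<bar>x i\<bar> powr p)"

end

theory Submission
  imports Defs
begin

lemma key_ineq:
  fixes p q :: real and r :: nat and j d :: int
  assumes p1: "1 < p" and q1: "1 < q" and pq: "1 / p + 1 / q = 1" and r1: "r > 1"
  shows "real r powr (j/p) * real r powr (- real_of_int d/q) \<le> real r powr (- real_of_int d) + real r powr j / real r powr (1/q)"
proof -
  define k where "k = j + d"
  have rp: "real r > 1" using r1 by simp
  have e1: "real r powr (j/p) * real r powr (- real_of_int d/q) = real r powr (- real_of_int d) * real r powr (k/p)"
  proof -
    have h: "1/p = 1 - 1/q" using pq by simp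
    have "j/p + (- real_of_int d/q) = j*(1/p) - d*(1/q)" by simp
    also have "\<dots> = - real_of_int d + k*(1/p)" unfolding h k_def by (simp add: algebra_simps)
    also have "\<dots> = - real_of_int d + k/p" by simp
    finally have "j/p + (- real_of_int d/q) = - real_of_int d + k/p" .
    thus ?thesis by (simp add: powr_add[symmetric])
  qed
  have e2: "real r powr j / real r powr (1/q) = real r powr (- real_of_int d) * real r powr (k - 1/q)"
  proof -
    have "real r powr j / real r powr (1/q) = real r powr (j - 1/q)"
      by (simp add: powr_diff)
    also have "j - 1/q = - real_of_int d + (k - 1/q)" unfolding k_def by simp
    finally show ?thesis by (simp add: powr_add[symmetric])
  qed
  have main: "real r powr (k/p) \<le> 1 + real r powr (k - 1/q)"
  proof (cases "k \<le> 0")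
    case True
    have "k/p \<le> 0" using True p1 by (simp add: divide_nonpos_pos)
    hence "real r powr (k/p) \<le> 1" using powr_mono[of "k/p" 0 "real r"] rp by simp
    moreover have "real r powr (k - 1/q) \<ge> 0" by simp
    ultimately show ?thesis by linarith
  next
    case False
    hence "k \<ge> 1" by simp
    have h2: "1 - 1/p = 1/q" using pq by simp
    have "k - k/p = k*(1 - 1/p)" by (simp add: right_diff_distrib)
    also have "\<dots> = k/q" using h2 by simp
    finally have "k - k/p = k/q" .
    moreover have "k/q \<ge> 1/q" using \<open>k \<ge> 1\<close> q1 by (simp add: divide_right_mono)
    ultimately have "k/p \<le> k - 1/q" by linarith
    hence "real r powr (k/p) \<le> real r powr (k - 1/q)" using rp by simp
    thus ?thesis by linarith
  qed
  have "real r powr (- real_of_int d) > 0" using rp by simp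
  hence "real r powr (- real_of_int d) * real r powr (k/p) \<le> real r powr (- real_of_int d) * (1 + real r powr (k - 1/q))"
    using main by simp
  thus ?thesis using e1 e2 by (simp add: algebra_simps)
qed

definition Kinv :: "real \<Rightarrow> nat \<Rightarrow> (nat \<Rightarrow> real) \<Rightarrow> bool" where
  "Kinv q r y \<longleftrightarrow> finite (supp y) \<and> (\<forall>i. y i \<noteq> 0 \<longrightarrow> (\<exists>d::int. \<bar>y i\<bar> = real r powr (-d/q)))
     \<and> (\<Sum>i\<in>supp y. \<bar>y i\<bar> powr q) \<le> 1"

lemma supp_unit: "supp (unit_vec n) = {n}" "supp (\<lambda>i. - unit_vec n i) = {n}"
  by (auto simp: supp_def unit_vec_def)

lemma K_inv:
  assumes "y \<in> K_M q r" and q0: "q > 0" and r1: "r \<ge> 1"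
  shows "Kinv q r y"
  using assms(1)
proof (induction rule: K_M.induct)
  case (unit_pos n)
  show ?case unfolding Kinv_def supp_unit
    using r1 by (auto simp: unit_vec_def intro!: exI[of _ 0])
next
  case (unit_neg n)
  show ?case unfolding Kinv_def supp_unit
    using r1 by (auto simp: unit_vec_def intro!: exI[of _ 0])
next
  case (comb ys)
  define n where "n = length ys"
  define c where "c = real r powr (- 1 / q)"
  define Y where "Y i = (\<Sum>a<n. (ys!a) i)" for i
  define z where "z = (\<lambda>i. real r powr (- 1 / q) * (\<Sum>y\<leftarrow>ys. y i))"
  have rp: "real r \<ge> 1" using r1 by simp
  have IH: "\<And>a. a < n \<Longrightarrow> Kinv q r (ys!a)" using comb.IH n_def by auto
  have zY: "z i = c * Y i" for i
    unfolding z_def c_def Y_def n_def by (simp add: sum_list_sum_nth atLeast0LessThan)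
  have disj: "\<And>a b i. a < n \<Longrightarrow> b < n \<Longrightarrow> a \<noteq> b \<Longrightarrow> (ys!a) i \<noteq> 0 \<Longrightarrow> (ys!b) i = 0"
    using comb.hyps(3) n_def unfolding supp_def by blast
  have single: "\<And>(f::nat\<Rightarrow>real) a i. a < n \<Longrightarrow> (ys!a) i \<noteq> 0 \<Longrightarrow> (\<And>b. (ys!b) i = 0 \<Longrightarrow> f b = 0) \<Longrightarrow>
      (\<Sum>b<n. f b) = f a"
  proof -
    fix f :: "nat \<Rightarrow> real" and a i
    assume a: "a < n" "(ys!a) i \<noteq> 0" and f0: "\<And>b. (ys!b) i = 0 \<Longrightarrow> f b = 0"
    have "(\<Sum>b<n. f b) = f a + (\<Sum>b\<in>{..<n} - {a}. f b)"
      using a by (simp add: sum.remove)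
    also have "(\<Sum>b\<in>{..<n} - {a}. f b) = 0"
      by (rule sum.neutral) (use a disj f0 in auto)
    finally show "(\<Sum>b<n. f b) = f a" by simp
  qed
  have nz: "\<And>i. Y i \<noteq> 0 \<Longrightarrow> \<exists>a<n. (ys!a) i \<noteq> 0"
    unfolding Y_def by (meson sum.neutral lessThan_iff)
  define U where "U = (\<Union>a<n. supp (ys!a))"
  have finU: "finite U" unfolding U_def using IH Kinv_def by auto
  have suppz: "supp z \<subseteq> U"
    unfolding U_def supp_def using zY nz by fastforce
  have cq: "c powr q = 1 / real r"
  proof -
    have "c powr q = real r powr (- 1 / q * q)" unfolding c_def powr_powr ..
    also have "- 1 / q * q = - 1" using q0 by simp
    also have "real r powr (- 1) = 1 / real r" using r1 by (simp add: powr_minus_divide)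
    finally show ?thesis .
  qed
  have c0: "c \<ge> 0" unfolding c_def by simp
  have pt: "\<bar>z i\<bar> powr q = (1 / real r) * (\<Sum>a<n. \<bar>(ys!a) i\<bar> powr q)" for i
  proof (cases "Y i = 0")
    case True
    hence "z i = 0" using zY by simp
    moreover have "(\<Sum>a<n. \<bar>(ys!a) i\<bar> powr q) = 0"
    proof (rule ccontr)
      assume "(\<Sum>a<n. \<bar>(ys!a) i\<bar> powr q) \<noteq> 0"
      then obtain a where a0: "a \<in> {..<n}" "\<bar>(ys!a) i\<bar> powr q \<noteq> 0"
        using sum.neutral[of "{..<n}" "\<lambda>a. \<bar>(ys!a) i\<bar> powr q"] by blast
      hence a: "a < n" "(ys!a) i \<noteq> 0" by auto
      have "Y i = (ys!a) i" unfolding Y_def by (rule single[OF a]) simp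
      thus False using True a by simp
    qed
    ultimately show ?thesis by simp
  next
    case False
    then obtain a where a: "a < n" "(ys!a) i \<noteq> 0" using nz by blast
    have "Y i = (ys!a) i" unfolding Y_def by (rule single[OF a]) simp
    moreover have "(\<Sum>b<n. \<bar>(ys!b) i\<bar> powr q) = \<bar>(ys!a) i\<bar> powr q"
      by (rule single[OF a]) simp
    moreover have "\<bar>z i\<bar> powr q = c powr q * \<bar>Y i\<bar> powr q"
      unfolding zY abs_mult using c0 by (simp add: powr_mult)
    ultimately show ?thesis unfolding cq by simp
  qed
  have ent: "\<exists>d::int. \<bar>z i\<bar> = real r powr (-d/q)" if "z i \<noteq> 0" for i
  proof -
    have "Y i \<noteq> 0" using that zY by auto
    then obtain a where a: "a < n" "(ys!a) i \<noteq> 0" using nz by blast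
    have "Y i = (ys!a) i" unfolding Y_def by (rule single[OF a]) simp
    moreover obtain d :: int where d: "\<bar>(ys!a) i\<bar> = real r powr (- real_of_int d/q)"
      using IH[OF a(1)] a(2) unfolding Kinv_def by blast
    ultimately have "\<bar>z i\<bar> = real r powr (- 1 / q) * real r powr (- real_of_int d/q)"
      using zY c0 unfolding c_def by (simp add: abs_mult)
    also have "\<dots> = real r powr (- 1 / q + - real_of_int d / q)"
      by (simp only: powr_add)
    also have "- 1 / q + - real_of_int d / q = - real_of_int (d+1) / q"
      unfolding add_divide_distrib[symmetric] by simp
    finally show ?thesis by blast
  qed
  have "(\<Sum>i\<in>supp z. \<bar>z i\<bar> powr q) \<le> (\<Sum>i\<in>U. \<bar>z i\<bar> powr q)"
    by (rule sum_mono2[OF finU suppz]) simp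
  also have "\<dots> = (1 / real r) * (\<Sum>a<n. \<Sum>i\<in>U. \<bar>(ys!a) i\<bar> powr q)"
    unfolding pt sum_distrib_left[symmetric] by (rule arg_cong[where f="\<lambda>v. (1 / real r) * v"], rule sum.swap)
  also have "(\<Sum>a<n. \<Sum>i\<in>U. \<bar>(ys!a) i\<bar> powr q) \<le> (\<Sum>a<n. (1::real))"
  proof (rule sum_mono)
    fix a assume a: "a \<in> {..<n}"
    have sub: "supp (ys!a) \<subseteq> U" using a unfolding U_def by auto
    have "(\<Sum>i\<in>U. \<bar>(ys!a) i\<bar> powr q) = (\<Sum>i\<in>supp (ys!a). \<bar>(ys!a) i\<bar> powr q)"
      by (rule sum.mono_neutral_right[OF finU sub]) (auto simp: supp_def)
    also have "\<dots> \<le> 1" using IH a unfolding Kinv_def by auto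
    finally show "(\<Sum>i\<in>U. \<bar>(ys!a) i\<bar> powr q) \<le> 1" .
  qed
  hence "(1 / real r) * (\<Sum>a<n. \<Sum>i\<in>U. \<bar>(ys!a) i\<bar> powr q) \<le> (1 / real r) * real n"
    by (intro mult_left_mono) auto
  also have "\<dots> \<le> 1" using comb.hyps(2) n_def rp by (simp add: field_simps)
  finally have S: "(\<Sum>i\<in>supp z. \<bar>z i\<bar> powr q) \<le> 1" by simp
  have "finite (supp z)" using finU suppz finite_subset by blast
  thus ?case using S ent unfolding Kinv_def z_def[symmetric] by blast
qed

theorem mainTheorem4:
  fixes p q :: real and r :: nat and x :: "nat \<Rightarrow> real"
  assumes "1 < p" and "1 < q" and "1 / p + 1 / q = 1" and "r > 1"
    and "x \<in> N_set (real r powr (1 / p))"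
  shows "norm_pr p q r x \<le> 1 + lp_pow p x / real r powr (1 / q)"
  unfolding norm_pr_def
proof (rule cSUP_least)
  show "K_M q r \<noteq> {}" using K_M.unit_pos by blast
next
  fix y assume y: "y \<in> K_M q r"
  define t where "t = real r powr (1 / q)"
  have rp: "real r > 1" using assms(4) by simp
  have t0: "t > 0" unfolding t_def using rp by simp
  have Ky: "Kinv q r y" using K_inv[OF y] assms by simp
  have finx: "finite (supp x)" using assms(5) unfolding N_set_def c00_def by simp
  have pt: "x i * y i \<le> \<bar>y i\<bar> powr q + \<bar>x i\<bar> powr p / t" if i: "i \<in> supp x" for i
  proof (cases "y i = 0")
    case True thus ?thesis using t0 by simp
  next
    case False
    then obtain d :: int where d: "\<bar>y i\<bar> = real r powr (- real_of_int d/q)" using Ky unfolding Kinv_def by blast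
    have "x i \<in> C_set (real r powr (1 / p))" "x i \<noteq> 0"
      using assms(5) i unfolding N_set_def supp_def by auto
    then obtain j :: int where j: "\<bar>x i\<bar> = (real r powr (1 / p)) powr j"
      unfolding C_set_def by auto
    have j': "\<bar>x i\<bar> = real r powr (j / p)" using j by (simp add: powr_powr)
    have xp: "\<bar>x i\<bar> powr p = real r powr j" using j' assms(1) by (simp add: powr_powr)
    have yq: "\<bar>y i\<bar> powr q = real r powr (- real_of_int d)" using d assms(2) by (simp add: powr_powr)
    have "x i * y i \<le> \<bar>x i\<bar> * \<bar>y i\<bar>" by (metis abs_ge_self abs_mult)
    also have "\<dots> \<le> \<bar>y i\<bar> powr q + \<bar>x i\<bar> powr p / t"
      unfolding yq xp unfolding j' d t_def using key_ineq[OF assms(1-4)] by simp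
    finally show ?thesis .
  qed
  have "pair x y \<le> (\<Sum>i\<in>supp x. \<bar>y i\<bar> powr q + \<bar>x i\<bar> powr p / t)"
    unfolding pair_def by (rule sum_mono) (use pt in auto)
  also have "\<dots> = (\<Sum>i\<in>supp x. \<bar>y i\<bar> powr q) + lp_pow p x / t"
    unfolding lp_pow_def by (simp add: sum.distrib sum_divide_distrib)
  also have "(\<Sum>i\<in>supp x. \<bar>y i\<bar> powr q) \<le> 1"
  proof -
    have "(\<Sum>i\<in>supp x. \<bar>y i\<bar> powr q) = (\<Sum>i\<in>supp x \<inter> supp y. \<bar>y i\<bar> powr q)"
      by (rule sum.mono_neutral_right) (use finx in \<open>auto simp: supp_def\<close>)
    also have "\<dots> \<le> (\<Sum>i\<in>supp y. \<bar>y i\<bar> powr q)"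
      by (rule sum_mono2) (use Ky in \<open>auto simp: Kinv_def\<close>)
    also have "\<dots> \<le> 1" using Ky unfolding Kinv_def by simp
    finally show ?thesis .
  qed
  finally show "pair x y \<le> 1 + lp_pow p x / real r powr (1 / q)" unfolding t_def by simp
qed

end
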